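(* Let $\theta,\theta'\in(0,1)$ with $\theta<\theta'/N$. Then the natural embedding $\iota:F_\theta\to F_{\theta'}$ (with norms $\|\cdot\|_\theta$ and $\|\cdot\|_{\theta'}$) is a nuclear operator.
   Context: $\Sigma_{\mathbf A}^+$ is the one-sided Markov shift on $N$ symbols given by an $N\times N$ zero-one aperiodic matrix $\mathbf A$. For $\theta\in(0,1)$, $d_\theta(\omega,\omega')=\theta^{\min\{m:\omega_m\ne\omega'_m\}}$, $F_\theta$ is the space of complex $d_\theta$-Lipschitz functions with norm $\|\phi\|_\theta=\|\phi\|_\infty+[\phi]_\theta$, $[\phi]_\theta$ the Lipschitz constant; $F_\theta\subset F_{\theta'}$ for $\theta<\theta'$. A bounded operator $T:E\to F$ between Banach spaces is nuclear if $Tx=\sum_n\lambda_n\langle x,x'_n\rangle y_n$ with $(\lambda_n)$ summable and $(x'_n)\subset E'$, $(y_n)\subset F$ bounded. *)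

theory Defs
  imports "HOL-Analysis.Analysis"
begin

text \<open>Symbols are 0..N-1; the N x N zero-one matrix A is a function nat => nat => nat.\<close>

definition zero_one_matrix :: "nat \<Rightarrow> (nat \<Rightarrow> nat \<Rightarrow> nat) \<Rightarrow> bool" where
  "zero_one_matrix N A \<longleftrightarrow> (\<forall>i<N. \<forall>j<N. A i j = 0 \<or> A i j = 1)"

fun mat_pow :: "nat \<Rightarrow> (nat \<Rightarrow> nat \<Rightarrow> nat) \<Rightarrow> nat \<Rightarrow> nat \<Rightarrow> nat \<Rightarrow> nat" where
  "mat_pow N A 0 i j = (if i = j then 1 else 0)"
| "mat_pow N A (Suc m) i j = (\<Sum>k<N. mat_pow N A m i k * A k j)"

definition aperiodic_matrix :: "nat \<Rightarrow> (nat \<Rightarrow> nat \<Rightarrow> nat) \<Rightarrow> bool" where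
  "aperiodic_matrix N A \<longleftrightarrow> (\<exists>M>0. \<forall>i<N. \<forall>j<N. mat_pow N A M i j > 0)"

definition shift_space :: "nat \<Rightarrow> (nat \<Rightarrow> nat \<Rightarrow> nat) \<Rightarrow> (nat \<Rightarrow> nat) set" where
  "shift_space N A = {\<omega>. \<forall>m. \<omega> m < N \<and> A (\<omega> m) (\<omega> (Suc m)) = 1}"

definition dtheta :: "real \<Rightarrow> (nat \<Rightarrow> nat) \<Rightarrow> (nat \<Rightarrow> nat) \<Rightarrow> real" where
  "dtheta \<theta> \<omega> \<omega>' = (if \<omega> = \<omega>' then 0 else \<theta> ^ (LEAST m. \<omega> m \<noteq> \<omega>' m))"

definition sup_norm :: "nat \<Rightarrow> (nat \<Rightarrow> nat \<Rightarrow> nat) \<Rightarrow> ((nat \<Rightarrow> nat) \<Rightarrow> complex) \<Rightarrow> real" where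
  "sup_norm N A \<phi> = Sup (insert 0 ((\<lambda>\<omega>. cmod (\<phi> \<omega>)) ` shift_space N A))"

definition lip_set :: "nat \<Rightarrow> (nat \<Rightarrow> nat \<Rightarrow> nat) \<Rightarrow> real \<Rightarrow> ((nat \<Rightarrow> nat) \<Rightarrow> complex) \<Rightarrow> real set" where
  "lip_set N A \<theta> \<phi> = {cmod (\<phi> \<omega> - \<phi> \<omega>') / dtheta \<theta> \<omega> \<omega>' | \<omega> \<omega>'.
      \<omega> \<in> shift_space N A \<and> \<omega>' \<in> shift_space N A \<and> \<omega> \<noteq> \<omega>'}"

definition lip_const :: "nat \<Rightarrow> (nat \<Rightarrow> nat \<Rightarrow> nat) \<Rightarrow> real \<Rightarrow> ((nat \<Rightarrow> nat) \<Rightarrow> complex) \<Rightarrow> real" where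
  "lip_const N A \<theta> \<phi> = Sup (insert 0 (lip_set N A \<theta> \<phi>))"

definition F_norm :: "nat \<Rightarrow> (nat \<Rightarrow> nat \<Rightarrow> nat) \<Rightarrow> real \<Rightarrow> ((nat \<Rightarrow> nat) \<Rightarrow> complex) \<Rightarrow> real" where
  "F_norm N A \<theta> \<phi> = sup_norm N A \<phi> + lip_const N A \<theta> \<phi>"

definition F_space :: "nat \<Rightarrow> (nat \<Rightarrow> nat \<Rightarrow> nat) \<Rightarrow> real \<Rightarrow> ((nat \<Rightarrow> nat) \<Rightarrow> complex) set" where
  "F_space N A \<theta> = {\<phi>. (\<forall>\<omega>. \<omega> \<notin> shift_space N A \<longrightarrow> \<phi> \<omega> = 0) \<and>
      bdd_above ((\<lambda>\<omega>. cmod (\<phi> \<omega>)) ` shift_space N A) \<and> bdd_above (lip_set N A \<theta> \<phi>)}"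

definition nuclear_op ::
  "('a \<Rightarrow> complex) set \<Rightarrow> (('a \<Rightarrow> complex) \<Rightarrow> real) \<Rightarrow> ('b \<Rightarrow> complex) set \<Rightarrow> (('b \<Rightarrow> complex) \<Rightarrow> real)
   \<Rightarrow> (('a \<Rightarrow> complex) \<Rightarrow> ('b \<Rightarrow> complex)) \<Rightarrow> bool" where
  "nuclear_op E nE F nF T \<longleftrightarrow>
     (\<forall>x\<in>E. T x \<in> F) \<and>
     (\<forall>x\<in>E. \<forall>y\<in>E. T (\<lambda>t. x t + y t) = (\<lambda>t. T x t + T y t)) \<and>
     (\<forall>x\<in>E. \<forall>c::complex. T ((\<lambda>t. c * x t)) = (\<lambda>t. c * T x t)) \<and>
     (\<exists>C. \<forall>x\<in>E. nF (T x) \<le> C * nE x) \<and>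
     (\<exists>(lam :: nat \<Rightarrow> complex) (xs :: nat \<Rightarrow> ('a \<Rightarrow> complex) \<Rightarrow> complex) (ys :: nat \<Rightarrow> 'b \<Rightarrow> complex) C.
        summable (\<lambda>n. cmod (lam n)) \<and>
        (\<forall>n. \<forall>x\<in>E. \<forall>y\<in>E. xs n (\<lambda>t. x t + y t) = xs n x + xs n y) \<and>
        (\<forall>n. \<forall>x\<in>E. \<forall>c. xs n (\<lambda>t. c * x t) = c * xs n x) \<and>
        (\<forall>n. \<forall>x\<in>E. cmod (xs n x) \<le> C * nE x) \<and>
        (\<forall>n. ys n \<in> F \<and> nF (ys n) \<le> C) \<and>
        (\<forall>x\<in>E. (\<lambda>K. nF (\<lambda>t. T x t - (\<Sum>n<K. lam n * xs n x * ys n t))) \<longlonglongrightarrow> 0))"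

end

theory Submission
  imports Defs
begin

lemma dtheta_le:
  assumes "0 < \<theta>" "\<theta> \<le> 1" "\<omega> \<noteq> \<omega>'" "\<forall>j<m. \<omega> j = \<omega>' j"
  shows "dtheta \<theta> \<omega> \<omega>' \<le> \<theta> ^ m"
proof -
  have ex: "\<exists>l. \<omega> l \<noteq> \<omega>' l" using assms(3) by auto
  define l where "l = (LEAST l. \<omega> l \<noteq> \<omega>' l)"
  have "\<omega> l \<noteq> \<omega>' l" unfolding l_def using LeastI_ex[OF ex] .
  then have "m \<le> l" using assms(4) by (meson not_le)
  then have "\<theta> ^ l \<le> \<theta> ^ m" using assms by (intro power_decreasing) auto
  then show ?thesis using assms(3) unfolding dtheta_def l_def by simp
qed

lemma dtheta_ge:
  assumes "0 < \<theta>" "\<theta> \<le> 1" "j \<le> n" "\<omega> j \<noteq> \<omega>' j"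
  shows "\<theta> ^ n \<le> dtheta \<theta> \<omega> \<omega>'"
proof -
  define l where "l = (LEAST l. \<omega> l \<noteq> \<omega>' l)"
  have "l \<le> j" unfolding l_def using assms(4) by (rule Least_le)
  then have "\<theta> ^ n \<le> \<theta> ^ l" using assms by (intro power_decreasing) auto
  moreover have "\<omega> \<noteq> \<omega>'" using assms(4) by auto
  ultimately show ?thesis unfolding dtheta_def l_def by simp
qed

lemma dtheta_pos: "0 < \<theta> \<Longrightarrow> \<omega> \<noteq> \<omega>' \<Longrightarrow> 0 < dtheta \<theta> \<omega> \<omega>'"
  unfolding dtheta_def by simp

lemma sup_bound:
  assumes "\<And>\<omega>. \<omega> \<in> shift_space N A \<Longrightarrow> cmod (g \<omega>) \<le> a" "0 \<le> a"
  shows "bdd_above ((\<lambda>\<omega>. cmod (g \<omega>)) ` shift_space N A)" "0 \<le> sup_norm N A g" "sup_norm N A g \<le> a"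
proof -
  show 1: "bdd_above ((\<lambda>\<omega>. cmod (g \<omega>)) ` shift_space N A)" using assms by (auto intro!: bdd_aboveI[of _ a])
  have "bdd_above (insert 0 ((\<lambda>\<omega>. cmod (g \<omega>)) ` shift_space N A))" using 1 by simp
  then show "0 \<le> sup_norm N A g" unfolding sup_norm_def by (rule cSup_upper[rotated]) simp
  show "sup_norm N A g \<le> a" unfolding sup_norm_def using assms by (intro cSup_least) auto
qed

lemma lip_bound:
  assumes "\<And>\<omega> \<omega>'. \<omega> \<in> shift_space N A \<Longrightarrow> \<omega>' \<in> shift_space N A \<Longrightarrow> \<omega> \<noteq> \<omega>' \<Longrightarrow>
      cmod (g \<omega> - g \<omega>') / dtheta \<theta> \<omega> \<omega>' \<le> a" "0 \<le> a"
  shows "bdd_above (lip_set N A \<theta> g)" "0 \<le> lip_const N A \<theta> g" "lip_const N A \<theta> g \<le> a"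
proof -
  show 1: "bdd_above (lip_set N A \<theta> g)" using assms unfolding lip_set_def by (auto intro!: bdd_aboveI[of _ a])
  have "bdd_above (insert 0 (lip_set N A \<theta> g))" using 1 by simp
  then show "0 \<le> lip_const N A \<theta> g" unfolding lip_const_def by (rule cSup_upper[rotated]) simp
  show "lip_const N A \<theta> g \<le> a" unfolding lip_const_def lip_set_def using assms by (intro cSup_least) auto
qed

lemma F_sup:
  assumes "\<phi> \<in> F_space N A \<theta>" "\<omega> \<in> shift_space N A"
  shows "cmod (\<phi> \<omega>) \<le> sup_norm N A \<phi>"
proof -
  have "bdd_above (insert 0 ((\<lambda>\<omega>. cmod (\<phi> \<omega>)) ` shift_space N A))" using assms(1) unfolding F_space_def by simp
  then show ?thesis unfolding sup_norm_def by (rule cSup_upper[rotated]) (use assms in auto)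
qed

lemma F_sup_nn:
  assumes "\<phi> \<in> F_space N A \<theta>" shows "0 \<le> sup_norm N A \<phi>"
proof -
  have "bdd_above (insert 0 ((\<lambda>\<omega>. cmod (\<phi> \<omega>)) ` shift_space N A))" using assms(1) unfolding F_space_def by simp
  then show ?thesis unfolding sup_norm_def by (rule cSup_upper[rotated]) auto
qed

lemma F_lip_nn:
  assumes "\<phi> \<in> F_space N A \<theta>" shows "0 \<le> lip_const N A \<theta> \<phi>"
proof -
  have "bdd_above (insert 0 (lip_set N A \<theta> \<phi>))" using assms(1) unfolding F_space_def by simp
  then show ?thesis unfolding lip_const_def by (rule cSup_upper[rotated]) auto
qed

lemma F_lip:
  assumes "\<phi> \<in> F_space N A \<theta>" "\<omega> \<in> shift_space N A" "\<omega>' \<in> shift_space N A" "0 < \<theta>"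
  shows "cmod (\<phi> \<omega> - \<phi> \<omega>') \<le> lip_const N A \<theta> \<phi> * dtheta \<theta> \<omega> \<omega>'"
proof (cases "\<omega> = \<omega>'")
  case True
  then show ?thesis using F_lip_nn[OF assms(1)] by (simp add: dtheta_def)
next
  case False
  have "bdd_above (insert 0 (lip_set N A \<theta> \<phi>))" using assms(1) unfolding F_space_def by simp
  moreover have "cmod (\<phi> \<omega> - \<phi> \<omega>') / dtheta \<theta> \<omega> \<omega>' \<in> insert 0 (lip_set N A \<theta> \<phi>)"
    unfolding lip_set_def using assms False by blast
  ultimately have "cmod (\<phi> \<omega> - \<phi> \<omega>') / dtheta \<theta> \<omega> \<omega>' \<le> lip_const N A \<theta> \<phi>"
    unfolding lip_const_def by (intro cSup_upper)
  then show ?thesis using dtheta_pos[OF assms(4) False] by (simp add: pos_divide_le_eq)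
qed


definition code :: "nat \<Rightarrow> nat \<Rightarrow> (nat \<Rightarrow> nat) \<Rightarrow> nat" where
  "code N m \<omega> = (\<Sum>j<m. \<omega> j * N ^ j)"

definition Pt :: "nat \<Rightarrow> (nat \<Rightarrow> nat \<Rightarrow> nat) \<Rightarrow> nat \<Rightarrow> (nat \<Rightarrow> nat) \<Rightarrow> (nat \<Rightarrow> nat)" where
  "Pt N A m \<omega> = (SOME \<omega>'. \<omega>' \<in> shift_space N A \<and> (\<forall>j<m. \<omega>' j = \<omega> j))"

fun bb :: "nat \<Rightarrow> nat \<Rightarrow> nat" where
  "bb N 0 = 1"
| "bb N (Suc n) = bb N n + N ^ Suc n"

definition lev :: "nat \<Rightarrow> nat \<Rightarrow> nat" where
  "lev N i = (LEAST n. i < bb N (Suc n))"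

definition off :: "nat \<Rightarrow> nat \<Rightarrow> nat" where
  "off N i = i - bb N (lev N i)"

lemma code_cong: "(\<forall>j<m. \<omega> j = \<omega>' j) \<Longrightarrow> code N m \<omega> = code N m \<omega>'"
  unfolding code_def by (intro sum.cong) auto

lemma code_lt: "(\<forall>j<m. \<omega> j < N) \<Longrightarrow> code N m \<omega> < N ^ m"
proof (induction m)
  case 0 then show ?case by (simp add: code_def)
next
  case (Suc m)
  have c: "code N m \<omega> < N ^ m" using Suc by simp
  have w: "\<omega> m + 1 \<le> N" using Suc.prems by (simp add: Suc_le_eq)
  have "code N (Suc m) \<omega> = code N m \<omega> + \<omega> m * N ^ m" by (simp add: code_def)
  also have "\<dots> < N ^ m + \<omega> m * N ^ m" using c by simp
  also have "\<dots> = (\<omega> m + 1) * N ^ m" by simp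
  also have "\<dots> \<le> N * N ^ m" using w by (intro mult_right_mono) auto
  finally show ?case by simp
qed

lemma code_inj:
  assumes "0 < N" "\<forall>j<m. \<omega> j < N" "\<forall>j<m. \<omega>' j < N" "code N m \<omega> = code N m \<omega>'"
  shows "\<forall>j<m. \<omega> j = \<omega>' j"
  using assms
proof (induction m)
  case 0 then show ?case by simp
next
  case (Suc m)
  have c: "code N m \<omega> < N ^ m" "code N m \<omega>' < N ^ m" using Suc.prems code_lt by auto
  have e: "code N m \<omega> + \<omega> m * N ^ m = code N m \<omega>' + \<omega>' m * N ^ m"
    using Suc.prems(4) by (simp add: code_def)
  have "(code N m \<omega> + \<omega> m * N ^ m) mod N ^ m = (code N m \<omega>' + \<omega>' m * N ^ m) mod N ^ m"
    using e by simp
  then have c1: "code N m \<omega> = code N m \<omega>'" using c by simp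
  then have "\<omega> m * N ^ m = \<omega>' m * N ^ m" using e by simp
  then have "\<omega> m = \<omega>' m" using Suc.prems(1) by simp
  moreover have "\<forall>j<m. \<omega> j = \<omega>' j" using Suc.IH Suc.prems c1 by auto
  ultimately show ?case using less_Suc_eq by auto
qed

lemma shift_lt: "\<omega> \<in> shift_space N A \<Longrightarrow> \<omega> j < N"
  unfolding shift_space_def by auto

lemma Pt_cong: "(\<forall>j<m. x j = y j) \<Longrightarrow> Pt N A m x = Pt N A m y"
proof -
  assume a: "\<forall>j<m. x j = y j"
  have "(\<lambda>\<omega>'. \<omega>' \<in> shift_space N A \<and> (\<forall>j<m. \<omega>' j = x j)) = (\<lambda>\<omega>'. \<omega>' \<in> shift_space N A \<and> (\<forall>j<m. \<omega>' j = y j))"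
    using a by auto
  then show ?thesis unfolding Pt_def by simp
qed

lemma Pt_in:
  assumes "\<omega> \<in> shift_space N A"
  shows "Pt N A m \<omega> \<in> shift_space N A" "\<forall>j<m. Pt N A m \<omega> j = \<omega> j"
proof -
  have "\<exists>\<omega>'. \<omega>' \<in> shift_space N A \<and> (\<forall>j<m. \<omega>' j = \<omega> j)" using assms by auto
  from someI_ex[OF this] show "Pt N A m \<omega> \<in> shift_space N A" "\<forall>j<m. Pt N A m \<omega> j = \<omega> j"
    unfolding Pt_def by auto
qed

lemma bb_mono: "m \<le> n \<Longrightarrow> bb N m \<le> bb N n"
  by (induction n) (auto simp: le_Suc_eq)

lemma bb_ge: "0 < N \<Longrightarrow> n + 1 \<le> bb N n"
proof (induction n)
  case 0 then show ?case by simp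
next
  case (Suc n)
  have "1 \<le> N ^ Suc n" using Suc.prems by (simp del: power_Suc)
  moreover have "n + 1 \<le> bb N n" using Suc by simp
  ultimately show ?case by (simp only: bb.simps)
qed

lemma lev_eq:
  assumes "0 < N" "k < N ^ Suc n"
  shows "lev N (bb N n + k) = n" "off N (bb N n + k) = k"
proof -
  show 1: "lev N (bb N n + k) = n" unfolding lev_def
  proof (rule Least_equality)
    show "bb N n + k < bb N (Suc n)" using assms by simp
    fix m assume "bb N n + k < bb N (Suc m)"
    then show "n \<le> m" using bb_mono[of "Suc m" n N] by (cases "Suc m \<le> n") auto
  qed
  show "off N (bb N n + k) = k" unfolding off_def 1 by simp
qed

lemma lev_decomp:
  assumes "0 < N" "1 \<le> K"
  shows "bb N (lev N K) \<le> K" "K < bb N (Suc (lev N K))"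
proof -
  have ex: "\<exists>n. K < bb N (Suc n)" using bb_ge[OF assms(1), of "Suc K"] by (intro exI[of _ K]) simp
  show "K < bb N (Suc (lev N K))" unfolding lev_def using LeastI_ex[OF ex] .
  show "bb N (lev N K) \<le> K"
  proof (cases "lev N K")
    case 0 then show ?thesis using assms by simp
  next
    case (Suc p)
    have "\<not> K < bb N (Suc p)"
      using not_less_Least[of p "\<lambda>n. K < bb N (Suc n)"] Suc unfolding lev_def by simp
    then show ?thesis using Suc by simp
  qed
qed

lemma lev_ge: "0 < N \<Longrightarrow> bb N m \<le> K \<Longrightarrow> m \<le> lev N K"
proof (rule ccontr)
  assume a: "0 < N" "bb N m \<le> K" "\<not> m \<le> lev N K"
  have "1 \<le> K" using a(2) bb_ge[OF a(1), of m] by simp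
  then have "K < bb N (Suc (lev N K))" using lev_decomp a by auto
  moreover have "bb N (Suc (lev N K)) \<le> bb N m" using a by (intro bb_mono) simp
  ultimately show False using a by simp
qed


definition RR :: "nat \<Rightarrow> (nat \<Rightarrow> nat \<Rightarrow> nat) \<Rightarrow> nat \<Rightarrow> nat \<Rightarrow> (nat \<Rightarrow> nat)" where
  "RR N A n k = (SOME \<omega>. \<omega> \<in> shift_space N A \<and> code N (Suc n) \<omega> = k)"

definition lamS :: "nat \<Rightarrow> real \<Rightarrow> real \<Rightarrow> nat \<Rightarrow> complex" where
  "lamS N \<theta> \<theta>' i = (if i = 0 then 1 else complex_of_real ((\<theta> / \<theta>') ^ lev N i))"

definition xsS :: "nat \<Rightarrow> (nat \<Rightarrow> nat \<Rightarrow> nat) \<Rightarrow> real \<Rightarrow> nat \<Rightarrow> ((nat \<Rightarrow> nat) \<Rightarrow> complex) \<Rightarrow> complex" where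
  "xsS N A \<theta> i \<phi> = (if i = 0 then \<phi> (Pt N A 0 (\<lambda>_. 0))
     else if \<exists>\<omega>\<in>shift_space N A. code N (Suc (lev N i)) \<omega> = off N i
     then (\<phi> (Pt N A (Suc (lev N i)) (RR N A (lev N i) (off N i))) - \<phi> (Pt N A (lev N i) (RR N A (lev N i) (off N i))))
          / complex_of_real (\<theta> ^ lev N i)
     else 0)"

definition ysS :: "nat \<Rightarrow> (nat \<Rightarrow> nat \<Rightarrow> nat) \<Rightarrow> real \<Rightarrow> nat \<Rightarrow> (nat \<Rightarrow> nat) \<Rightarrow> complex" where
  "ysS N A \<theta>' i = (if i = 0 then (\<lambda>\<omega>. if \<omega> \<in> shift_space N A then 1 else 0)
     else (\<lambda>\<omega>. if \<omega> \<in> shift_space N A \<and> code N (Suc (lev N i)) \<omega> = off N i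
               then complex_of_real (\<theta>' ^ lev N i) else 0))"

lemma RR_in:
  assumes "\<omega> \<in> shift_space N A" "code N (Suc n) \<omega> = k"
  shows "RR N A n k \<in> shift_space N A" "code N (Suc n) (RR N A n k) = k"
proof -
  have "\<exists>\<omega>. \<omega> \<in> shift_space N A \<and> code N (Suc n) \<omega> = k" using assms by auto
  from someI_ex[OF this] show "RR N A n k \<in> shift_space N A" "code N (Suc n) (RR N A n k) = k"
    unfolding RR_def by auto
qed

lemma term0:
  assumes "\<omega> \<in> shift_space N A"
  shows "lamS N \<theta> \<theta>' 0 * xsS N A \<theta> 0 \<phi> * ysS N A \<theta>' 0 \<omega> = \<phi> (Pt N A 0 \<omega>)"
proof -
  have "Pt N A 0 (\<lambda>_. 0) = Pt N A 0 \<omega>" by (rule Pt_cong) simp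
  then show ?thesis using assms by (simp add: lamS_def xsS_def ysS_def)
qed

lemma termS:
  assumes "0 < N" "0 < \<theta>" "0 < \<theta>'" "i \<noteq> 0" "\<omega> \<in> shift_space N A"
  shows "lamS N \<theta> \<theta>' i * xsS N A \<theta> i \<phi> * ysS N A \<theta>' i \<omega> =
    (if code N (Suc (lev N i)) \<omega> = off N i then \<phi> (Pt N A (Suc (lev N i)) \<omega>) - \<phi> (Pt N A (lev N i) \<omega>) else 0)"
proof (cases "code N (Suc (lev N i)) \<omega> = off N i")
  case True
  define n where "n = lev N i"
  define k where "k = off N i"
  have c: "code N (Suc n) \<omega> = k" using True n_def k_def by simp
  note R = RR_in[OF assms(5) c]
  have ag: "\<forall>j<Suc n. RR N A n k j = \<omega> j"
    by (rule code_inj[OF assms(1)]) (use R assms(5) c shift_lt in auto)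
  have p1: "Pt N A (Suc n) (RR N A n k) = Pt N A (Suc n) \<omega>" using ag by (intro Pt_cong) auto
  have p0: "Pt N A n (RR N A n k) = Pt N A n \<omega>" using ag by (intro Pt_cong) auto
  have ex: "\<exists>\<omega>\<in>shift_space N A. code N (Suc n) \<omega> = k" using assms(5) c by auto
  have ar: "complex_of_real ((\<theta> / \<theta>') ^ n) * (1 / complex_of_real (\<theta> ^ n)) * complex_of_real (\<theta>' ^ n) = 1"
  proof -
    have z: "\<theta> \<noteq> 0" "\<theta>' \<noteq> 0" using assms by auto
    have q: "(\<theta> / \<theta>') ^ n * \<theta>' ^ n = \<theta> ^ n" using z by (simp add: power_divide)
    have "(\<theta> / \<theta>') ^ n * (1 / \<theta> ^ n) * \<theta>' ^ n = ((\<theta> / \<theta>') ^ n * \<theta>' ^ n) / \<theta> ^ n" by simp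
    also have "\<dots> = 1" using q z by simp
    finally have "(\<theta> / \<theta>') ^ n * (1 / \<theta> ^ n) * \<theta>' ^ n = 1" .
    then have "complex_of_real ((\<theta> / \<theta>') ^ n * (1 / \<theta> ^ n) * \<theta>' ^ n) = 1" by (metis of_real_1)
    then show ?thesis by (simp only: of_real_mult of_real_divide of_real_1)
  qed
  define d where "d = \<phi> (Pt N A (Suc n) \<omega>) - \<phi> (Pt N A n \<omega>)"
  have "lamS N \<theta> \<theta>' i * xsS N A \<theta> i \<phi> * ysS N A \<theta>' i \<omega> =
     complex_of_real ((\<theta> / \<theta>') ^ n) * (d / complex_of_real (\<theta> ^ n)) * complex_of_real (\<theta>' ^ n)"
    using assms(4,5) ex c p0 p1 unfolding lamS_def xsS_def ysS_def n_def[symmetric] k_def[symmetric] d_def by simp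
  also have "\<dots> = d * (complex_of_real ((\<theta> / \<theta>') ^ n) * (1 / complex_of_real (\<theta> ^ n)) * complex_of_real (\<theta>' ^ n))"
    by (simp only: divide_inverse mult_1_left ac_simps)
  also have "\<dots> = d" by (simp only: ar mult_1_right)
  finally show ?thesis using True unfolding d_def n_def k_def by simp
next
  case False
  then show ?thesis using assms by (simp add: ysS_def)
qed

lemma Mclaim:
  assumes "0 < N" "0 < \<theta>" "0 < \<theta>'" "\<omega> \<in> shift_space N A"
  shows "k \<le> N ^ Suc n \<Longrightarrow> (\<Sum>i<bb N n + k. lamS N \<theta> \<theta>' i * xsS N A \<theta> i \<phi> * ysS N A \<theta>' i \<omega>) =
    (if code N (Suc n) \<omega> < k then \<phi> (Pt N A (Suc n) \<omega>) else \<phi> (Pt N A n \<omega>))"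
proof (induction n arbitrary: k)
  case 0
  show ?case using "0.prems"
  proof (induction k)
    case 0
    then show ?case using term0[OF assms(4)] by simp
  next
    case (Suc k)
    have k: "k < N ^ Suc 0" using Suc.prems by simp
    have IH: "(\<Sum>i<bb N 0 + k. lamS N \<theta> \<theta>' i * xsS N A \<theta> i \<phi> * ysS N A \<theta>' i \<omega>) =
      (if code N (Suc 0) \<omega> < k then \<phi> (Pt N A (Suc 0) \<omega>) else \<phi> (Pt N A 0 \<omega>))" using Suc k by simp
    note L = lev_eq[OF assms(1) k]
    have T: "lamS N \<theta> \<theta>' (bb N 0 + k) * xsS N A \<theta> (bb N 0 + k) \<phi> * ysS N A \<theta>' (bb N 0 + k) \<omega> =
      (if code N (Suc 0) \<omega> = k then \<phi> (Pt N A (Suc 0) \<omega>) - \<phi> (Pt N A 0 \<omega>) else 0)"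
      using termS[OF assms(1,2,3) _ assms(4), of "bb N 0 + k" \<phi>] L by simp
    show ?case using IH T by (auto simp: lessThan_Suc)
  qed
next
  case (Suc n)
  show ?case using Suc.prems
  proof (induction k)
    case 0
    have "(\<Sum>i<bb N (Suc n) + 0. lamS N \<theta> \<theta>' i * xsS N A \<theta> i \<phi> * ysS N A \<theta>' i \<omega>) =
       (\<Sum>i<bb N n + N ^ Suc n. lamS N \<theta> \<theta>' i * xsS N A \<theta> i \<phi> * ysS N A \<theta>' i \<omega>)" by simp
    also have "\<dots> = \<phi> (Pt N A (Suc n) \<omega>)"
      using Suc.IH[of "N ^ Suc n"] code_lt[of "Suc n" \<omega> N] shift_lt[OF assms(4)] by auto
    finally show ?case by simp
  next
    case (Suc k)
    have k: "k < N ^ Suc (Suc n)" using Suc.prems by simp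
    have IH: "(\<Sum>i<bb N (Suc n) + k. lamS N \<theta> \<theta>' i * xsS N A \<theta> i \<phi> * ysS N A \<theta>' i \<omega>) =
      (if code N (Suc (Suc n)) \<omega> < k then \<phi> (Pt N A (Suc (Suc n)) \<omega>) else \<phi> (Pt N A (Suc n) \<omega>))" using Suc k by simp
    note L = lev_eq[OF assms(1) k]
    have T: "lamS N \<theta> \<theta>' (bb N (Suc n) + k) * xsS N A \<theta> (bb N (Suc n) + k) \<phi> * ysS N A \<theta>' (bb N (Suc n) + k) \<omega> =
      (if code N (Suc (Suc n)) \<omega> = k then \<phi> (Pt N A (Suc (Suc n)) \<omega>) - \<phi> (Pt N A (Suc n) \<omega>) else 0)"
      using termS[OF assms(1,2,3) _ assms(4), of "bb N (Suc n) + k" \<phi>] L bb_ge[OF assms(1), of "Suc n"] by (simp del: bb.simps)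
    have "bb N (Suc n) + Suc k = Suc (bb N (Suc n) + k)" by simp
    then show ?case using IH T by (auto simp del: bb.simps simp: lessThan_Suc)
  qed
qed


lemma dtheta_ratio:
  assumes "0 < \<theta>" "\<theta> \<le> \<theta>'" "\<omega> \<noteq> \<omega>'" "\<forall>j<m. \<omega> j = \<omega>' j"
  shows "dtheta \<theta> \<omega> \<omega>' \<le> (\<theta> / \<theta>') ^ m * dtheta \<theta>' \<omega> \<omega>'"
proof -
  have ex: "\<exists>l. \<omega> l \<noteq> \<omega>' l" using assms(3) by auto
  define l where "l = (LEAST l. \<omega> l \<noteq> \<omega>' l)"
  have "\<omega> l \<noteq> \<omega>' l" unfolding l_def using LeastI_ex[OF ex] .
  then have ml: "m \<le> l" using assms(4) by (meson not_le)
  have tp: "0 < \<theta>'" using assms by simp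
  have r0: "0 \<le> \<theta> / \<theta>'" "\<theta> / \<theta>' \<le> 1" using assms tp by auto
  have "\<theta> ^ l = (\<theta> / \<theta>') ^ l * \<theta>' ^ l" using tp by (simp add: power_divide)
  also have "\<dots> \<le> (\<theta> / \<theta>') ^ m * \<theta>' ^ l"
    using r0 ml tp by (intro mult_right_mono power_decreasing) auto
  finally show ?thesis using assms(3) unfolding dtheta_def l_def by simp
qed

lemma emb:
  assumes "\<phi> \<in> F_space N A \<theta>" "0 < \<theta>" "\<theta> \<le> \<theta>'"
  shows "\<phi> \<in> F_space N A \<theta>'" "F_norm N A \<theta>' \<phi> \<le> F_norm N A \<theta> \<phi>"
proof -
  define L where "L = lip_const N A \<theta> \<phi>"
  have L0: "0 \<le> L" using F_lip_nn[OF assms(1)] L_def by simp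
  have q: "cmod (\<phi> \<omega> - \<phi> \<omega>') / dtheta \<theta>' \<omega> \<omega>' \<le> L"
    if "\<omega> \<in> shift_space N A" "\<omega>' \<in> shift_space N A" "\<omega> \<noteq> \<omega>'" for \<omega> \<omega>'
  proof -
    have "cmod (\<phi> \<omega> - \<phi> \<omega>') \<le> L * dtheta \<theta> \<omega> \<omega>'" using F_lip[OF assms(1) that(1,2) assms(2)] L_def by simp
    also have "\<dots> \<le> L * dtheta \<theta>' \<omega> \<omega>'"
      using dtheta_ratio[OF assms(2,3) that(3), of 0] L0 by (intro mult_left_mono) auto
    finally show ?thesis using dtheta_pos[of \<theta>' \<omega> \<omega>'] assms that by (simp add: pos_divide_le_eq)
  qed
  note lb = lip_bound[of N A \<phi> \<theta>' L, OF q L0]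
  show "\<phi> \<in> F_space N A \<theta>'" using assms(1) lb(1) unfolding F_space_def by simp
  show "F_norm N A \<theta>' \<phi> \<le> F_norm N A \<theta> \<phi>" using lb(3) unfolding F_norm_def L_def by simp
qed

lemma ys_prop:
  assumes "0 < \<theta>'" "\<theta>' \<le> 1"
  shows "ysS N A \<theta>' i \<in> F_space N A \<theta>' \<and> F_norm N A \<theta>' (ysS N A \<theta>' i) \<le> 2"
proof (cases "i = 0")
  case True
  have s: "bdd_above ((\<lambda>\<omega>. cmod (ysS N A \<theta>' i \<omega>)) ` shift_space N A)" "sup_norm N A (ysS N A \<theta>' i) \<le> 1"
    using sup_bound[of N A "ysS N A \<theta>' i" 1] True by (auto simp: ysS_def)
  have l: "bdd_above (lip_set N A \<theta>' (ysS N A \<theta>' i))" "lip_const N A \<theta>' (ysS N A \<theta>' i) \<le> 0"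
    using lip_bound[of N A "ysS N A \<theta>' i" \<theta>' 0] True by (auto simp: ysS_def)
  show ?thesis using s l True unfolding F_space_def F_norm_def by (auto simp: ysS_def)
next
  case False
  define n where "n = lev N i"
  define k where "k = off N i"
  have y: "ysS N A \<theta>' i = (\<lambda>\<omega>. if \<omega> \<in> shift_space N A \<and> code N (Suc n) \<omega> = k then complex_of_real (\<theta>' ^ n) else 0)"
    unfolding ysS_def n_def k_def using False by simp
  have tn: "\<theta>' ^ n \<le> 1" using assms by (simp add: power_le_one)
  have pt: "cmod (ysS N A \<theta>' i \<omega>) \<le> 1" if "\<omega> \<in> shift_space N A" for \<omega>
    unfolding y using tn assms by (auto simp: norm_power)
  note s = sup_bound[of N A "ysS N A \<theta>' i" 1, OF pt]
  have q: "cmod (ysS N A \<theta>' i \<omega> - ysS N A \<theta>' i \<omega>') / dtheta \<theta>' \<omega> \<omega>' \<le> 1"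
    if "\<omega> \<in> shift_space N A" "\<omega>' \<in> shift_space N A" "\<omega> \<noteq> \<omega>'" for \<omega> \<omega>'
  proof (cases "(code N (Suc n) \<omega> = k) = (code N (Suc n) \<omega>' = k)")
    case True
    then show ?thesis unfolding y using that by auto
  next
    case F: False
    then have "code N (Suc n) \<omega> \<noteq> code N (Suc n) \<omega>'" by auto
    then obtain j where j: "j < Suc n" "\<omega> j \<noteq> \<omega>' j" using code_cong[of "Suc n" \<omega> \<omega>' N] by auto
    have d: "\<theta>' ^ n \<le> dtheta \<theta>' \<omega> \<omega>'" using dtheta_ge[OF assms, of j n \<omega> \<omega>'] j by simp
    have "cmod (ysS N A \<theta>' i \<omega> - ysS N A \<theta>' i \<omega>') = \<theta>' ^ n" using F that assms unfolding y by (auto simp: norm_power)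
    then show ?thesis using d dtheta_pos[OF assms(1) that(3)] by (simp add: pos_divide_le_eq)
  qed
  note l = lip_bound[of N A "ysS N A \<theta>' i" \<theta>' 1, OF q]
  show ?thesis using s l unfolding F_space_def F_norm_def by (auto simp: y)
qed

lemma xs_lin:
  "xsS N A \<theta> i (\<lambda>t. x t + y t) = xsS N A \<theta> i x + xsS N A \<theta> i y"
  "xsS N A \<theta> i (\<lambda>t. c * x t) = c * xsS N A \<theta> i x"
proof -
  have e1: "(a + b - (c' + d)) / e = (a - c') / e + (b - d) / e" for a b c' d e :: complex
    by (simp add: add_divide_distrib[symmetric] algebra_simps)
  have e2: "(c * a - c * b) / e = c * ((a - b) / e)" for a b e :: complex
    by (simp add: algebra_simps)
  show "xsS N A \<theta> i (\<lambda>t. x t + y t) = xsS N A \<theta> i x + xsS N A \<theta> i y"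
    unfolding xsS_def by (simp add: e1)
  show "xsS N A \<theta> i (\<lambda>t. c * x t) = c * xsS N A \<theta> i x"
    unfolding xsS_def by (simp add: e2)
qed

lemma near:
  assumes "\<phi> \<in> F_space N A \<theta>" "0 < \<theta>" "\<theta> \<le> 1" "\<omega> \<in> shift_space N A" "\<omega>' \<in> shift_space N A"
    "\<forall>j<n. \<omega> j = \<omega>' j"
  shows "cmod (\<phi> \<omega> - \<phi> \<omega>') \<le> lip_const N A \<theta> \<phi> * \<theta> ^ n"
proof (cases "\<omega> = \<omega>'")
  case True then show ?thesis using F_lip_nn[OF assms(1)] assms by simp
next
  case False
  have "cmod (\<phi> \<omega> - \<phi> \<omega>') \<le> lip_const N A \<theta> \<phi> * dtheta \<theta> \<omega> \<omega>'" by (rule F_lip[OF assms(1,4,5,2)])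
  also have "\<dots> \<le> lip_const N A \<theta> \<phi> * \<theta> ^ n"
    using dtheta_le[OF assms(2,3) False assms(6)] F_lip_nn[OF assms(1)] by (intro mult_left_mono) auto
  finally show ?thesis .
qed

lemma xs_bound:
  assumes "\<phi> \<in> F_space N A \<theta>" "0 < \<theta>" "\<theta> \<le> 1"
  shows "cmod (xsS N A \<theta> i \<phi>) \<le> 2 * F_norm N A \<theta> \<phi>"
proof -
  have S0: "0 \<le> sup_norm N A \<phi>" using F_sup_nn[OF assms(1)] .
  have L0: "0 \<le> lip_const N A \<theta> \<phi>" using F_lip_nn[OF assms(1)] .
  have "cmod (xsS N A \<theta> i \<phi>) \<le> F_norm N A \<theta> \<phi>"
  proof (cases "i = 0")
    case True
    show ?thesis
    proof (cases "Pt N A 0 (\<lambda>_. 0) \<in> shift_space N A")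
      case True
      then show ?thesis using F_sup[OF assms(1) True] L0 \<open>i = 0\<close> by (simp add: xsS_def F_norm_def)
    next
      case False
      then have "\<phi> (Pt N A 0 (\<lambda>_. 0)) = 0" using assms(1) unfolding F_space_def by auto
      then show ?thesis using S0 L0 \<open>i = 0\<close> by (simp add: xsS_def F_norm_def)
    qed
  next
    case False
    define n where "n = lev N i"
    define k where "k = off N i"
    show ?thesis
    proof (cases "\<exists>\<omega>\<in>shift_space N A. code N (Suc n) \<omega> = k")
      case True
      then obtain \<omega> where w: "\<omega> \<in> shift_space N A" "code N (Suc n) \<omega> = k" by auto
      define R where "R = RR N A n k"
      have R: "R \<in> shift_space N A" using RR_in[OF w] R_def by simp
      note P1 = Pt_in[OF R, of "Suc n"] and P0 = Pt_in[OF R, of n]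
      have ag: "\<forall>j<n. Pt N A (Suc n) R j = Pt N A n R j" using P1(2) P0(2) by auto
      have d: "cmod (\<phi> (Pt N A (Suc n) R) - \<phi> (Pt N A n R)) \<le> lip_const N A \<theta> \<phi> * \<theta> ^ n"
        by (rule near[OF assms P1(1) P0(1) ag])
      have x: "xsS N A \<theta> i \<phi> = (\<phi> (Pt N A (Suc n) R) - \<phi> (Pt N A n R)) / complex_of_real (\<theta> ^ n)"
        using False True unfolding xsS_def n_def k_def R_def by simp
      have "cmod (xsS N A \<theta> i \<phi>) = cmod (\<phi> (Pt N A (Suc n) R) - \<phi> (Pt N A n R)) / \<theta> ^ n"
        unfolding x using assms(2) by (simp add: norm_divide norm_power)
      also have "\<dots> \<le> lip_const N A \<theta> \<phi>" using d assms(2) by (simp add: pos_divide_le_eq)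
      finally show ?thesis using S0 by (simp add: F_norm_def)
    next
      case F2: False
      then show ?thesis using False S0 L0 unfolding xsS_def n_def k_def by (simp add: F_norm_def)
    qed
  qed
  then show ?thesis using S0 L0 by (simp add: F_norm_def)
qed


lemma lam_norm: "0 < \<theta> \<Longrightarrow> 0 < \<theta>' \<Longrightarrow> i \<noteq> 0 \<Longrightarrow> cmod (lamS N \<theta> \<theta>' i) = (\<theta> / \<theta>') ^ lev N i"
  by (simp add: lamS_def norm_power norm_divide)

lemma lam_sum:
  assumes "0 < N" "0 < \<theta>" "0 < \<theta>'"
  shows "k \<le> N ^ Suc n \<Longrightarrow> (\<Sum>i<bb N n + k. cmod (lamS N \<theta> \<theta>' i)) =
     1 + real N * (\<Sum>j<n. (real N * (\<theta> / \<theta>')) ^ j) + real k * (\<theta> / \<theta>') ^ n"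
proof (induction n arbitrary: k)
  case 0
  show ?case using "0.prems"
  proof (induction k)
    case 0 then show ?case by (simp add: lamS_def)
  next
    case (Suc k)
    have k: "k < N ^ Suc 0" using Suc.prems by simp
    have "cmod (lamS N \<theta> \<theta>' (bb N 0 + k)) = 1"
      using lam_norm[OF assms(2,3), of "bb N 0 + k" N] lev_eq[OF assms(1) k] by simp
    then show ?case using Suc k by (simp add: lessThan_Suc)
  qed
next
  case (Suc n)
  show ?case using Suc.prems
  proof (induction k)
    case 0
    have "(\<Sum>i<bb N (Suc n) + 0. cmod (lamS N \<theta> \<theta>' i)) = (\<Sum>i<bb N n + N ^ Suc n. cmod (lamS N \<theta> \<theta>' i))" by simp
    also have "\<dots> = 1 + real N * (\<Sum>j<n. (real N * (\<theta> / \<theta>')) ^ j) + real (N ^ Suc n) * (\<theta> / \<theta>') ^ n"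
      using Suc.IH[of "N ^ Suc n"] by simp
    also have "real (N ^ Suc n) * (\<theta> / \<theta>') ^ n = real N * (real N * (\<theta> / \<theta>')) ^ n"
      by (simp only: of_nat_mult of_nat_power power_Suc power_mult_distrib mult.assoc)
    finally show ?case by (simp add: algebra_simps)
  next
    case (Suc k)
    have k: "k < N ^ Suc (Suc n)" using Suc.prems by simp
    have IH: "(\<Sum>i<bb N (Suc n) + k. cmod (lamS N \<theta> \<theta>' i)) =
      1 + real N * (\<Sum>j<Suc n. (real N * (\<theta> / \<theta>')) ^ j) + real k * (\<theta> / \<theta>') ^ Suc n" using Suc k by simp
    have ne: "bb N (Suc n) + k \<noteq> 0" using bb_ge[OF assms(1), of "Suc n"] by linarith
    have T: "cmod (lamS N \<theta> \<theta>' (bb N (Suc n) + k)) = (\<theta> / \<theta>') ^ Suc n"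
      using lam_norm[OF assms(2,3) ne] lev_eq[OF assms(1) k] by simp
    have "bb N (Suc n) + Suc k = Suc (bb N (Suc n) + k)" by simp
    then show ?case using IH T by (simp del: bb.simps power_Suc add: lessThan_Suc distrib_right)
  qed
qed

lemma lam_summable:
  assumes "0 < N" "0 < \<theta>" "0 < \<theta>'" "real N * (\<theta> / \<theta>') < 1"
  shows "summable (\<lambda>i. cmod (lamS N \<theta> \<theta>' i))"
proof (rule summableI_nonneg_bounded)
  define q where "q = real N * (\<theta> / \<theta>')"
  have q0: "0 \<le> q" "q < 1" using assms q_def by auto
  fix K
  have "(\<Sum>i<K. cmod (lamS N \<theta> \<theta>' i)) \<le> (\<Sum>i<bb N K + 0. cmod (lamS N \<theta> \<theta>' i))"
    using bb_ge[OF assms(1), of K] by (intro sum_mono2) auto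
  also have "\<dots> = 1 + real N * (\<Sum>j<K. q ^ j)" using lam_sum[OF assms(1,2,3), of 0 K] q_def by simp
  also have "(\<Sum>j<K. q ^ j) \<le> 1 / (1 - q)"
  proof -
    have "(\<Sum>j<K. q ^ j) = (1 - q ^ K) / (1 - q)" using q0 by (simp add: sum_gp_strict)
    also have "\<dots> \<le> 1 / (1 - q)" using q0 by (intro divide_right_mono) auto
    finally show ?thesis .
  qed
  then have "1 + real N * (\<Sum>j<K. q ^ j) \<le> 1 + real N * (1 / (1 - q))" by (intro add_left_mono mult_left_mono) auto
  finally show "(\<Sum>i<K. cmod (lamS N \<theta> \<theta>' i)) \<le> 1 + real N * (1 / (1 - q))" .
qed simp

lemma conv_bound:
  assumes "0 < N" "0 < \<theta>" "\<theta> \<le> \<theta>'" "\<theta>' \<le> 1" "\<phi> \<in> F_space N A \<theta>" "1 \<le> K"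
  defines "g \<equiv> (\<lambda>t. \<phi> t - (\<Sum>i<K. lamS N \<theta> \<theta>' i * xsS N A \<theta> i \<phi> * ysS N A \<theta>' i t))"
  shows "0 \<le> F_norm N A \<theta>' g \<and> F_norm N A \<theta>' g \<le> 3 * lip_const N A \<theta> \<phi> * (\<theta> / \<theta>') ^ lev N K"
proof -
  have tp: "0 < \<theta>'" "\<theta> \<le> 1" using assms by auto
  define n where "n = lev N K"
  define k where "k = K - bb N n"
  define L where "L = lip_const N A \<theta> \<phi>"
  define r where "r = \<theta> / \<theta>'"
  have L0: "0 \<le> L" using F_lip_nn[OF assms(5)] L_def by simp
  have r0: "0 \<le> r" "r \<le> 1" using assms tp r_def by auto
  have thr: "\<theta> ^ n \<le> r ^ n"
  proof -
    have "\<theta> \<le> r" unfolding r_def using assms tp by (simp add: le_divide_eq mult_le_cancel_left1)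
    then show ?thesis using assms by (intro power_mono) auto
  qed
  note D = lev_decomp[OF assms(1,6)]
  have Kk: "K = bb N n + k" "k \<le> N ^ Suc n" using D unfolding n_def k_def by auto
  define M where "M = (\<lambda>\<omega>. if code N (Suc n) \<omega> < k then \<phi> (Pt N A (Suc n) \<omega>) else \<phi> (Pt N A n \<omega>))"
  have gM: "g \<omega> = \<phi> \<omega> - M \<omega>" if "\<omega> \<in> shift_space N A" for \<omega>
    unfolding g_def M_def Kk(1) using Mclaim[OF assms(1,2) tp(1) that Kk(2)] by simp
  have gb: "cmod (g \<omega>) \<le> L * \<theta> ^ n" if w: "\<omega> \<in> shift_space N A" for \<omega>
  proof -
    have "cmod (\<phi> \<omega> - \<phi> (Pt N A m \<omega>)) \<le> L * \<theta> ^ n" if "n \<le> m" for m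
      using near[OF assms(5,2) tp(2) w Pt_in(1)[OF w, of m], of n] Pt_in(2)[OF w, of m] that L_def by auto
    then show ?thesis unfolding gM[OF w] M_def by auto
  qed
  have sb: "cmod (g \<omega>) \<le> L * r ^ n" if "\<omega> \<in> shift_space N A" for \<omega>
    using gb[OF that] thr L0 by (meson mult_left_mono order_trans)
  note S = sup_bound[of N A g "L * r ^ n", OF sb]
  have qb: "cmod (g \<omega> - g \<omega>') / dtheta \<theta>' \<omega> \<omega>' \<le> 2 * L * r ^ n"
    if w: "\<omega> \<in> shift_space N A" "\<omega>' \<in> shift_space N A" "\<omega> \<noteq> \<omega>'" for \<omega> \<omega>'
  proof (cases "\<forall>j<Suc n. \<omega> j = \<omega>' j")
    case True
    have "M \<omega> = M \<omega>'" unfolding M_def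
      using code_cong[OF True, of N] Pt_cong[OF True, of N A] Pt_cong[of n \<omega> \<omega>' N A] True by auto
    then have e: "g \<omega> - g \<omega>' = \<phi> \<omega> - \<phi> \<omega>'" using gM w by simp
    have "cmod (\<phi> \<omega> - \<phi> \<omega>') \<le> L * dtheta \<theta> \<omega> \<omega>'" using F_lip[OF assms(5) w(1,2) assms(2)] L_def by simp
    also have "\<dots> \<le> L * (r ^ Suc n * dtheta \<theta>' \<omega> \<omega>')"
      using dtheta_ratio[OF assms(2,3) w(3) True] L0 r_def by (intro mult_left_mono) auto
    also have "\<dots> \<le> L * (r ^ n * dtheta \<theta>' \<omega> \<omega>')"
      using r0 dtheta_pos[OF tp(1) w(3)] L0
      by (intro mult_left_mono mult_right_mono power_decreasing) auto
    finally have "cmod (g \<omega> - g \<omega>') \<le> (L * r ^ n) * dtheta \<theta>' \<omega> \<omega>'" using e by (simp add: ac_simps)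
    then have "cmod (g \<omega> - g \<omega>') / dtheta \<theta>' \<omega> \<omega>' \<le> L * r ^ n"
      using dtheta_pos[OF tp(1) w(3)] by (simp add: pos_divide_le_eq)
    also have "\<dots> \<le> 2 * L * r ^ n" using L0 r0 by simp
    finally show ?thesis .
  next
    case False
    then obtain j where j: "j \<le> n" "\<omega> j \<noteq> \<omega>' j" by (auto simp: less_Suc_eq_le)
    have d: "\<theta>' ^ n \<le> dtheta \<theta>' \<omega> \<omega>'" using dtheta_ge[of \<theta>' j n \<omega> \<omega>', OF tp(1) assms(4) j(1) j(2)] .
    have tn: "0 < \<theta>' ^ n" using tp by simp
    have "cmod (g \<omega> - g \<omega>') \<le> cmod (g \<omega>) + cmod (g \<omega>')" by (rule norm_triangle_ineq4)
    also have "\<dots> \<le> 2 * L * \<theta> ^ n" using gb[OF w(1)] gb[OF w(2)] by simp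
    finally have c: "cmod (g \<omega> - g \<omega>') \<le> 2 * L * \<theta> ^ n" .
    have "cmod (g \<omega> - g \<omega>') / dtheta \<theta>' \<omega> \<omega>' \<le> cmod (g \<omega> - g \<omega>') / \<theta>' ^ n"
      using d tn by (intro divide_left_mono) auto
    also have "\<dots> \<le> 2 * L * \<theta> ^ n / \<theta>' ^ n" using c tn by (intro divide_right_mono) auto
    also have "\<dots> = 2 * L * r ^ n" unfolding r_def by (simp add: power_divide)
    finally show ?thesis .
  qed
  note Lb = lip_bound[of N A g \<theta>' "2 * L * r ^ n", OF qb]
  show ?thesis using S Lb L0 r0 unfolding F_norm_def L_def[symmetric] r_def[symmetric] n_def[symmetric] by auto
qed


theorem lemmaB3:
  fixes N :: nat and A :: "nat \<Rightarrow> nat \<Rightarrow> nat" and \<theta> \<theta>' :: real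
  assumes "zero_one_matrix N A" and "aperiodic_matrix N A"
    and "0 < \<theta>" and "\<theta> < 1" and "0 < \<theta>'" and "\<theta>' < 1"
    and "\<theta> < \<theta>' / real N"
  shows "nuclear_op (F_space N A \<theta>) (F_norm N A \<theta>) (F_space N A \<theta>') (F_norm N A \<theta>') (\<lambda>\<phi>. \<phi>)"
proof -
  have N0: "0 < N"
  proof (rule ccontr)
    assume "\<not> 0 < N"
    then have "N = 0" by simp
    then show False using assms(3,7) by simp
  qed
  have Nr: "1 \<le> real N" using N0 by simp
  have tN: "\<theta> * real N < \<theta>'" using assms(7) N0 by (simp add: less_divide_eq)
  have "\<theta> \<le> \<theta> * real N" using Nr assms(3) by simp
  then have tt: "\<theta> \<le> \<theta>'" using tN by simp
  have q: "real N * (\<theta> / \<theta>') < 1" using tN assms(5) by (simp add: field_simps)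
  have t1: "\<theta> \<le> 1" "\<theta>' \<le> 1" using assms by auto
  have r0: "0 \<le> \<theta> / \<theta>'" using assms by simp
  have "\<theta> / \<theta>' \<le> real N * (\<theta> / \<theta>')" using mult_right_mono[OF Nr r0] by simp
  then have r1: "\<theta> / \<theta>' < 1" using q by simp
  have conv: "(\<lambda>K. F_norm N A \<theta>' (\<lambda>t. \<phi> t - (\<Sum>n<K. lamS N \<theta> \<theta>' n * xsS N A \<theta> n \<phi> * ysS N A \<theta>' n t))) \<longlonglongrightarrow> 0"
    if phi: "\<phi> \<in> F_space N A \<theta>" for \<phi>
  proof (rule Lim_null_comparison)
    define L where "L = lip_const N A \<theta> \<phi>"
    show "\<forall>\<^sub>F K in sequentially. norm (F_norm N A \<theta>' (\<lambda>t. \<phi> t - (\<Sum>n<K. lamS N \<theta> \<theta>' n * xsS N A \<theta> n \<phi> * ysS N A \<theta>' n t)))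
        \<le> 3 * L * (\<theta> / \<theta>') ^ lev N K"
      unfolding eventually_sequentially
    proof (intro exI[of _ 1] allI impI)
      fix K :: nat assume "1 \<le> K"
      from conv_bound[OF N0 assms(3) tt t1(2) phi this] show "norm (F_norm N A \<theta>' (\<lambda>t. \<phi> t - (\<Sum>n<K. lamS N \<theta> \<theta>' n * xsS N A \<theta> n \<phi> * ysS N A \<theta>' n t)))
        \<le> 3 * L * (\<theta> / \<theta>') ^ lev N K" unfolding L_def by simp
    qed
    have lv: "filterlim (lev N) sequentially sequentially"
      unfolding filterlim_at_top eventually_sequentially
      using lev_ge[OF N0] by blast
    have "(\<lambda>n. (\<theta> / \<theta>') ^ n) \<longlonglongrightarrow> 0" using r0 r1 by (intro LIMSEQ_power_zero) auto
    from filterlim_compose[OF this lv] have "(\<lambda>K. (\<theta> / \<theta>') ^ lev N K) \<longlonglongrightarrow> 0" by simp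
    then show "(\<lambda>K. 3 * L * (\<theta> / \<theta>') ^ lev N K) \<longlonglongrightarrow> 0" by (intro tendsto_mult_right_zero)
  qed
  show ?thesis
    unfolding nuclear_op_def
  proof (intro conjI)
    show "\<forall>x\<in>F_space N A \<theta>. x \<in> F_space N A \<theta>'" using emb(1)[OF _ assms(3) tt] by blast
    show "\<forall>x\<in>F_space N A \<theta>. \<forall>y\<in>F_space N A \<theta>. (\<lambda>t. x t + y t) = (\<lambda>t. x t + y t)" by simp
    show "\<forall>x\<in>F_space N A \<theta>. \<forall>c. (\<lambda>t. c * x t) = (\<lambda>t. c * x t)" by simp
    show "\<exists>C. \<forall>x\<in>F_space N A \<theta>. F_norm N A \<theta>' x \<le> C * F_norm N A \<theta> x"
      using emb(2)[OF _ assms(3) tt] by (intro exI[of _ 1]) simp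
    show "\<exists>lam xs ys C.
       summable (\<lambda>n. cmod (lam n)) \<and>
       (\<forall>n. \<forall>x\<in>F_space N A \<theta>. \<forall>y\<in>F_space N A \<theta>. xs n (\<lambda>t. x t + y t) = xs n x + xs n y) \<and>
       (\<forall>n. \<forall>x\<in>F_space N A \<theta>. \<forall>c. xs n (\<lambda>t. c * x t) = c * xs n x) \<and>
       (\<forall>n. \<forall>x\<in>F_space N A \<theta>. cmod (xs n x) \<le> C * F_norm N A \<theta> x) \<and>
       (\<forall>n. ys n \<in> F_space N A \<theta>' \<and> F_norm N A \<theta>' (ys n) \<le> C) \<and>
       (\<forall>x\<in>F_space N A \<theta>. (\<lambda>K. F_norm N A \<theta>' (\<lambda>t. x t - (\<Sum>n<K. lam n * xs n x * ys n t))) \<longlonglongrightarrow> 0)"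
      apply (rule exI[of _ "lamS N \<theta> \<theta>'"], rule exI[of _ "xsS N A \<theta>"], rule exI[of _ "ysS N A \<theta>'"], rule exI[of _ 2])
      apply (intro conjI)
      subgoal by (rule lam_summable[OF N0 assms(3,5) q])
      subgoal by (simp add: xs_lin)
      subgoal by (simp add: xs_lin)
      subgoal using xs_bound[OF _ assms(3) t1(1)] by blast
      subgoal using ys_prop[OF assms(5) t1(2)] by blast
      subgoal using conv by blast
      done
  qed
qed

end
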